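(* Let $L$ be a shift having left special factors of arbitrarily large length, and let $\mu$ be a $\sigma$-invariant, nonatomic, regular Borel probability measure on $L$, positive on nonempty cylinders, with $\mu(SP_L)=0$. Let $V=\{v^{(k)}\}_{k>0}$ be as defined below. Then $V$ is infinite and $L=\bigsqcup_{k>0}Cyl_L(v^{(k)})\sqcup W_{SP_L}$, a disjoint union, where $W_{SP_L}=\sigma^{-1}(SP_L)$. Moreover: (i) for every $k$ and all $w<w'$ in $Cyl_L(v^{(k)})$, $\sigma([w,w'])=[\sigma(w),\sigma(w')]$; (ii) $W_{SP_L}$ is nonempty, has $\mu$-measure $0$, and consists exactly of the accumulation points in $L$ of the set of endpoints (smallest and greatest words) of the cylinders $Cyl_L(v^{(k)})$.
   Context: $A$ is a finite totally ordered alphabet. $A^{\mathbb N}$ has the lexicographic order and the Cantor topology, and $\sigma$ deletes the first letter. A shift is a closed $L\subseteq A^{\mathbb N}$ with $\sigma(L)\subseteq L$. $Fact_L$ is the set of finite factors of words of $L$, and $Cyl_L(v)=\{w\in L: v \text{ prefix of } w\}$. For $w\le w'$ in $L$, $[w,w']=\{w''\in L:w\le w''\le w'\}$. A factor $u\in Fact_L$ is left special if $bu\in Fact_L$ for at least two distinct $b\in A$. $SP_L$ is the set of infinite words all of whose finite prefixes are left special factors of $L$. Let $V=\{v^{(k)}\}_{k>0}$ be an enumeration of the set of words $au\in Fact_L$ with $a\in A$ and $u$ a nonempty word such that $u$ is not left special while every nonempty proper prefix of $u$ is left special. These are the cylinders produced by iteratively refining $CYL_L(n)$, stopping at cylinders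 $Cyl_L(au)$ with $u$ not left special. *)

theory Defs
  imports "HOL-Analysis.Analysis" "HOL-Probability.Probability"
begin

(* Infinite words over a finite totally ordered alphabet 'a are functions nat => 'a;
   finite words are lists. *)

definition shift :: "(nat \<Rightarrow> 'a) \<Rightarrow> (nat \<Rightarrow> 'a)" where
  "shift w = (\<lambda>n. w (Suc n))"

definition lex_less :: "(nat \<Rightarrow> 'a::linorder) \<Rightarrow> (nat \<Rightarrow> 'a) \<Rightarrow> bool" where
  "lex_less w w' \<longleftrightarrow> (\<exists>n. (\<forall>i<n. w i = w' i) \<and> w n < w' n)"

definition lex_le :: "(nat \<Rightarrow> 'a::linorder) \<Rightarrow> (nat \<Rightarrow> 'a) \<Rightarrow> bool" where
  "lex_le w w' \<longleftrightarrow> lex_less w w' \<or> w = w'"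

definition cantor_top :: "(nat \<Rightarrow> 'a) topology" where
  "cantor_top = product_topology (\<lambda>_. discrete_topology UNIV) UNIV"

definition is_shift :: "(nat \<Rightarrow> 'a) set \<Rightarrow> bool" where
  "is_shift L \<longleftrightarrow> closedin cantor_top L \<and> shift ` L \<subseteq> L"

definition is_prefix :: "'a list \<Rightarrow> (nat \<Rightarrow> 'a) \<Rightarrow> bool" where
  "is_prefix v w \<longleftrightarrow> (\<forall>i<length v. w i = v ! i)"

definition Fact :: "(nat \<Rightarrow> 'a) set \<Rightarrow> 'a list set" where
  "Fact L = {u. \<exists>w\<in>L. \<exists>i. u = map w [i..<i + length u]}"

definition Cyl :: "(nat \<Rightarrow> 'a) set \<Rightarrow> 'a list \<Rightarrow> (nat \<Rightarrow> 'a) set" where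
  "Cyl L v = {w\<in>L. is_prefix v w}"

definition interval :: "(nat \<Rightarrow> 'a::linorder) set \<Rightarrow> (nat \<Rightarrow> 'a) \<Rightarrow> (nat \<Rightarrow> 'a) \<Rightarrow> (nat \<Rightarrow> 'a) set" where
  "interval L w w' = {x\<in>L. lex_le w x \<and> lex_le x w'}"

definition left_special :: "(nat \<Rightarrow> 'a) set \<Rightarrow> 'a list \<Rightarrow> bool" where
  "left_special L u \<longleftrightarrow> (\<exists>b c. b \<noteq> c \<and> b # u \<in> Fact L \<and> c # u \<in> Fact L)"

definition SP :: "(nat \<Rightarrow> 'a) set \<Rightarrow> (nat \<Rightarrow> 'a) set" where
  "SP L = {w. \<forall>n. left_special L (map w [0..<n])}"

definition W_SP :: "(nat \<Rightarrow> 'a) set \<Rightarrow> (nat \<Rightarrow> 'a) set" where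
  "W_SP L = {w\<in>L. shift w \<in> SP L}"

definition Vset :: "(nat \<Rightarrow> 'a) set \<Rightarrow> 'a list set" where
  "Vset L = {a # u | a u. a # u \<in> Fact L \<and> u \<noteq> [] \<and> \<not> left_special L u \<and>
               (\<forall>k. 0 < k \<and> k < length u \<longrightarrow> left_special L (take k u))}"

definition endpoints :: "(nat \<Rightarrow> 'a::linorder) set \<Rightarrow> (nat \<Rightarrow> 'a) set" where
  "endpoints L = {x. \<exists>v\<in>Vset L. x \<in> Cyl L v \<and>
       ((\<forall>y\<in>Cyl L v. lex_le x y) \<or> (\<forall>y\<in>Cyl L v. lex_le y x))}"

definition borel_sets_of :: "'b topology \<Rightarrow> 'b set set" where
  "borel_sets_of T = sigma_sets (topspace T) {U. openin T U}"

definition regular_measure :: "'b topology \<Rightarrow> 'b measure \<Rightarrow> bool" where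
  "regular_measure T M \<longleftrightarrow> (\<forall>S\<in>sets M.
      emeasure M S = (INF U\<in>{U. openin T U \<and> S \<subseteq> U}. emeasure M U) \<and>
      emeasure M S = (SUP K\<in>{K. compactin T K \<and> K \<subseteq> S}. emeasure M K))"

end

theory Submission
  imports Defs
begin

definition cyl :: "nat \<Rightarrow> (nat \<Rightarrow> 'a) \<Rightarrow> (nat \<Rightarrow> 'a) set" where
  "cyl n x = {y. \<forall>i<n. y i = x i}"

lemma open_cyl_aux:
  assumes f: "finite {i. V i \<noteq> UNIV}" and x: "x \<in> Pi\<^sub>E UNIV V"
  shows "\<exists>n. cyl n x \<subseteq> Pi\<^sub>E UNIV V"
proof -
  obtain n where n: "{i. V i \<noteq> UNIV} \<subseteq> {..<n}"
    using f finite_nat_bounded by presburger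
  have "cyl n x \<subseteq> Pi\<^sub>E UNIV V"
  proof
    fix y assume y: "y \<in> cyl n x"
    have "y i \<in> V i" for i
    proof (cases "V i = UNIV")
      case False then have "i < n" using n by auto
      then have "y i = x i" using y by (simp add: cyl_def)
      moreover have "x i \<in> V i" using x by (simp add: PiE_iff)
      ultimately show ?thesis by simp
    qed simp
    then show "y \<in> Pi\<^sub>E UNIV V" by (simp add: PiE_iff)
  qed
  then show ?thesis by blast
qed

lemma topspace_cantor[simp]: "topspace cantor_top = UNIV"
  by (simp add: cantor_top_def)

lemma openin_cantor_D: "openin cantor_top U \<Longrightarrow> x \<in> U \<Longrightarrow> \<exists>n. cyl n x \<subseteq> U"
proof -
  assume "openin cantor_top U" "x \<in> U"
  then have "\<exists>V. finite {i. V i \<noteq> UNIV} \<and> x \<in> Pi\<^sub>E UNIV V \<and> Pi\<^sub>E UNIV V \<subseteq> U"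
    by (simp add: cantor_top_def openin_product_topology_alt)
  then obtain V where "finite {i. V i \<noteq> UNIV}" "x \<in> Pi\<^sub>E UNIV V" "Pi\<^sub>E UNIV V \<subseteq> U"
    by blast
  then obtain n where "cyl n x \<subseteq> Pi\<^sub>E UNIV V" using open_cyl_aux by blast
  then show ?thesis using \<open>Pi\<^sub>E UNIV V \<subseteq> U\<close> by blast
qed

lemma openin_cantorI: "(\<And>x. x \<in> U \<Longrightarrow> \<exists>n. cyl n x \<subseteq> U) \<Longrightarrow> openin cantor_top U"
  unfolding cantor_top_def openin_product_topology_alt
proof (intro ballI)
  fix x assume h: "\<And>x. x \<in> U \<Longrightarrow> \<exists>n. cyl n x \<subseteq> U" and "x \<in> U"
  then obtain n where n: "cyl n x \<subseteq> U" by blast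
  define V where "V i = (if i < n then {x i} else UNIV)" for i
  have "{i \<in> UNIV. V i \<noteq> topspace (discrete_topology UNIV)} \<subseteq> {..<n}"
    by (auto simp: V_def)
  then have 1: "finite {i \<in> UNIV. V i \<noteq> topspace (discrete_topology UNIV)}"
    using finite_subset by blast
  have 2: "Pi\<^sub>E UNIV V = cyl n x"
  proof
    show "Pi\<^sub>E UNIV V \<subseteq> cyl n x"
    proof
      fix y assume "y \<in> Pi\<^sub>E UNIV V"
      then have "\<forall>i. y i \<in> V i" by (simp add: PiE_iff)
      have "y i = x i" if "i < n" for i
      proof -
        have "y i \<in> V i" using \<open>\<forall>i. y i \<in> V i\<close> by simp
        then show ?thesis using that by (simp add: V_def)
      qed
      then show "y \<in> cyl n x" unfolding cyl_def by simp
    qed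
  qed (auto simp: V_def cyl_def PiE_iff)
  have 3: "x \<in> cyl n x" by (simp add: cyl_def)
  have 4: "\<forall>i\<in>UNIV. openin (discrete_topology UNIV) (V i)" by simp
  show "\<exists>V. finite {i \<in> UNIV. V i \<noteq> topspace (discrete_topology UNIV)} \<and>
             (\<forall>i\<in>UNIV. openin (discrete_topology UNIV) (V i)) \<and> x \<in> Pi\<^sub>E UNIV V \<and> Pi\<^sub>E UNIV V \<subseteq> U"
    apply (rule exI[of _ V])
    using 1 2 3 4 n by simp
qed

lemma openin_cantorI': "(\<And>x. x \<in> U \<Longrightarrow> \<exists>n. \<forall>y. (\<forall>i<n. y i = x i) \<longrightarrow> y \<in> U) \<Longrightarrow> openin cantor_top U"
proof (rule openin_cantorI)
  fix x assume "(\<And>x. x \<in> U \<Longrightarrow> \<exists>n. \<forall>y. (\<forall>i<n. y i = x i) \<longrightarrow> y \<in> U)" "x \<in> U"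
  then obtain n where "\<forall>y. (\<forall>i<n. y i = x i) \<longrightarrow> y \<in> U" by blast
  then have "cyl n x \<subseteq> U" unfolding cyl_def by blast
  then show "\<exists>n. cyl n x \<subseteq> U" by blast
qed

lemma closed_lim:
  assumes "closedin cantor_top L" "\<And>n. \<exists>y\<in>L. \<forall>i<n. y i = s i"
  shows "s \<in> L"
proof (rule ccontr)
  assume "s \<notin> L"
  have "openin cantor_top (UNIV - L)" using assms(1) by (simp add: closedin_def)
  then obtain n where "cyl n s \<subseteq> UNIV - L" using \<open>s \<notin> L\<close> openin_cantor_D by blast
  moreover obtain y where "y \<in> L" "\<forall>i<n. y i = s i" using assms(2) by blast
  ultimately show False by (auto simp: cyl_def)
qed

lemma closedin_cantorI: "openin cantor_top (UNIV - C) \<Longrightarrow> closedin cantor_top C"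
  by (simp add: closedin_def)

lemma t1_cantor: "t1_space cantor_top"
proof -
  have "Hausdorff_space cantor_top"
    unfolding cantor_top_def Hausdorff_space_product_topology by simp
  then show ?thesis by (rule Hausdorff_imp_t1_space)
qed

lemma shift_iter: assumes "is_shift L" "w \<in> L" shows "(\<lambda>n. w (n+i)) \<in> L"
proof (induction i)
  case 0 then show ?case using assms by simp
next
  case (Suc i)
  have "(\<lambda>n. w (n + Suc i)) = shift (\<lambda>n. w (n+i))" by (simp add: shift_def)
  then show ?case using Suc assms(1) unfolding is_shift_def by auto
qed

lemma fact_prefix: assumes "is_shift L" "u \<in> Fact L" shows "\<exists>y\<in>L. is_prefix u y"
proof -
  obtain w i where w: "w \<in> L" "u = map w [i..<i + length u]" using assms(2) by (auto simp: Fact_def)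
  have "is_prefix u (\<lambda>n. w (n+i))"
    unfolding is_prefix_def by (subst w(2)) (simp add: add.commute)
  then show ?thesis using shift_iter[OF assms(1) w(1)] by blast
qed

lemma prefix_eq: "is_prefix v x \<Longrightarrow> v = map x [0..<length v]"
  unfolding is_prefix_def by (simp add: nth_equalityI)

lemma is_prefix_map[simp]: "is_prefix (map x [0..<n]) x"
  unfolding is_prefix_def by simp

lemma prefix_fact: "y \<in> L \<Longrightarrow> is_prefix u y \<Longrightarrow> u \<in> Fact L"
  unfolding Fact_def by (rule CollectI, rule bexI[of _ y], rule exI[of _ 0]) (auto dest: prefix_eq)

lemma fact_take: assumes "u \<in> Fact L" shows "take k u \<in> Fact L"
proof (cases "length u \<le> k")
  case True then show ?thesis using assms by simp
next
  case False
  obtain w i where w: "w \<in> L" "u = map w [i..<i + length u]" using assms by (auto simp: Fact_def)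
  have "take k u = map w (take k [i..<i + length u])" by (subst w(2)) (simp add: take_map)
  also have "take k [i..<i + length u] = [i..<i+k]" using False by (simp add: take_upt)
  finally have "take k u = map w [i..<i + length (take k u)]" using False by simp
  then show ?thesis using w(1) unfolding Fact_def by blast
qed

lemma ls_take: assumes "left_special L u" shows "left_special L (take k u)"
proof -
  obtain b c where "b \<noteq> c" "b # u \<in> Fact L" "c # u \<in> Fact L" using assms unfolding left_special_def by blast
  then have "b # take k u \<in> Fact L" "c # take k u \<in> Fact L"
    using fact_take[of "b#u" L "Suc k"] fact_take[of "c#u" L "Suc k"] by auto
  then show ?thesis using \<open>b \<noteq> c\<close> unfolding left_special_def by blast
qed

lemma pigeon:
  fixes P :: "'a::finite \<Rightarrow> nat \<Rightarrow> bool"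
  assumes "\<And>n. \<exists>a. P a n" "\<And>a m n. P a n \<Longrightarrow> m \<le> n \<Longrightarrow> P a m"
  shows "\<exists>a. \<forall>n. P a n"
proof (rule ccontr)
  assume "\<nexists>a. \<forall>n. P a n"
  then have "\<forall>a. \<exists>N. \<not> P a N" by blast
  then obtain N where N: "\<forall>a. \<not> P a (N a)" by (rule choice[THEN exE]) blast
  obtain a where "P a (Max (range N))" using assms(1) by blast
  moreover have "N a \<le> Max (range N)" by simp
  ultimately have "P a (N a)" using assms(2) by blast
  then show False using N by blast
qed

lemma lex_less_irrefl: "\<not> lex_less w w"
  unfolding lex_less_def by auto

lemma lex_less_asym: "lex_less w x \<Longrightarrow> \<not> lex_less x w"
proof
  assume a: "lex_less w x" "lex_less x w"
  from a(1) obtain n where n: "\<forall>i<n. w i = x i" "w n < x n" unfolding lex_less_def by blast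
  from a(2) obtain m where m: "\<forall>i<m. x i = w i" "x m < w m" unfolding lex_less_def by blast
  show False
  proof (cases n m rule: linorder_cases)
    case less then show ?thesis using n m by auto
  next
    case equal then show ?thesis using n m by auto
  next
    case greater then show ?thesis using n m by auto
  qed
qed

lemma lex_le_antisym: "lex_le w x \<Longrightarrow> lex_le x w \<Longrightarrow> w = x"
  unfolding lex_le_def using lex_less_asym by blast

lemma lex_between:
  assumes "lex_le w x" "lex_le x w'" "\<forall>i<k. w i = w' i"
  shows "\<forall>i<k. x i = w i"
  using assms(3)
proof (induction k)
  case 0 then show ?case by simp
next
  case (Suc k)
  then have IH: "\<forall>i<k. x i = w i" by simp
  have wk: "w k = w' k" using Suc.prems by simp
  have "x k = w k"
  proof (rule ccontr)
    assume ne: "x k \<noteq> w k"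
    then have "x \<noteq> w" "x \<noteq> w'" using wk by auto
    then have l1: "lex_less w x" and l2: "lex_less x w'" using assms(1,2) by (auto simp: lex_le_def)
    from l1 obtain n where n: "\<forall>i<n. w i = x i" "w n < x n" unfolding lex_less_def by blast
    from l2 obtain n' where n': "\<forall>i<n'. x i = w' i" "x n' < w' n'" unfolding lex_less_def by blast
    have "n = k"
    proof (cases n k rule: linorder_cases)
      case less then show ?thesis using n IH by auto
    next
      case greater then show ?thesis using n ne by auto
    qed simp
    moreover have "n' = k"
    proof (cases n' k rule: linorder_cases)
      case less then show ?thesis using n' IH Suc.prems by auto
    next
      case greater then show ?thesis using n' ne wk by auto
    qed simp
    ultimately show False using n n' wk by auto
  qed
  then show ?case using IH less_Suc_eq by auto
qed

lemma lex_less_shift: "w 0 = x 0 \<Longrightarrow> lex_less (shift w) (shift x) \<longleftrightarrow> lex_less w x"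
  unfolding lex_less_def shift_def
proof
  assume "w 0 = x 0" "\<exists>n. (\<forall>i<n. w (Suc i) = x (Suc i)) \<and> w (Suc n) < x (Suc n)"
  then obtain n where "\<forall>i<n. w (Suc i) = x (Suc i)" "w (Suc n) < x (Suc n)" by blast
  with \<open>w 0 = x 0\<close> show "\<exists>n. (\<forall>i<n. w i = x i) \<and> w n < x n"
    by (intro exI[of _ "Suc n"]) (auto simp: less_Suc_eq_0_disj)
next
  assume "w 0 = x 0" "\<exists>n. (\<forall>i<n. w i = x i) \<and> w n < x n"
  then obtain n where "\<forall>i<n. w i = x i" "w n < x n" by blast
  with \<open>w 0 = x 0\<close> show "\<exists>n. (\<forall>i<n. w (Suc i) = x (Suc i)) \<and> w (Suc n) < x (Suc n)"
    by (intro exI[of _ "n - 1"]) (cases n; auto)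
qed

lemma shift_inj0: "w 0 = x 0 \<Longrightarrow> shift w = shift x \<longleftrightarrow> w = x"
proof
  assume "w 0 = x 0" "shift w = shift x"
  then have s: "w (Suc n) = x (Suc n)" for n unfolding shift_def by (drule_tac x=n in fun_cong) simp
  show "w = x"
  proof (rule ext)
    fix n show "w n = x n" using s \<open>w 0 = x 0\<close> by (cases n) auto
  qed
qed simp

lemma lex_le_shift: "w 0 = x 0 \<Longrightarrow> lex_le (shift w) (shift x) \<longleftrightarrow> lex_le w x"
  unfolding lex_le_def by (simp add: lex_less_shift shift_inj0)

lemma ls_nil: assumes "\<forall>n. \<exists>u. left_special L u \<and> n \<le> length u" shows "left_special L []"
proof -
  obtain u where "left_special L u" using assms by blast
  then show ?thesis using ls_take[of L u 0] by simp
qed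

lemma map_shift: "map (shift w) [0..<n] = map (\<lambda>i. w (Suc i)) [0..<n]"
  by (simp add: shift_def)

lemma map_Suc_prefix: "w 0 # map (shift w) [0..<n] = map w [0..<Suc n]"
  by (rule nth_equalityI) (auto simp: shift_def nth_Cons split: nat.splits simp del: upt_Suc)

lemma covering:
  assumes "w \<in> L" "w \<notin> W_SP L" "left_special L []"
  shows "\<exists>v\<in>Vset L. w \<in> Cyl L v"
proof -
  have "shift w \<notin> SP L" using assms(1,2) by (simp add: W_SP_def)
  then have ex: "\<exists>n. \<not> left_special L (map (shift w) [0..<n])" by (simp add: SP_def)
  define n where "n = (LEAST n. \<not> left_special L (map (shift w) [0..<n]))"
  have nls: "\<not> left_special L (map (shift w) [0..<n])" unfolding n_def using ex by (rule LeastI_ex)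
  have lsk: "left_special L (map (shift w) [0..<k])" if "k < n" for k
    using not_less_Least[of k "\<lambda>n. \<not> left_special L (map (shift w) [0..<n])"] that n_def by blast
  have "n \<noteq> 0" using nls assms(3) by (cases n) auto
  define u where "u = map (shift w) [0..<n]"
  have pre: "is_prefix (w 0 # u) w" unfolding u_def map_Suc_prefix by (rule is_prefix_map)
  have "w 0 # u \<in> Vset L"
    unfolding Vset_def
  proof (intro CollectI exI conjI allI impI)
    show "w 0 # u = w 0 # u" by simp
    show "w 0 # u \<in> Fact L" using prefix_fact[OF assms(1) pre] .
    show "u \<noteq> []" using \<open>n \<noteq> 0\<close> by (simp add: u_def)
    show "\<not> left_special L u" using nls by (simp add: u_def)
    fix k assume "0 < k \<and> k < length u"
    then have "k < n" by (simp add: u_def)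
    moreover have "take k u = map (shift w) [0..<k]" using \<open>k < n\<close> by (simp add: u_def take_map)
    ultimately show "left_special L (take k u)" using lsk by simp
  qed
  moreover have "w \<in> Cyl L (w 0 # u)" using assms(1) pre by (simp add: Cyl_def)
  ultimately show ?thesis by blast
qed

lemma Vset_D: "v \<in> Vset L \<Longrightarrow> \<exists>a u. v = a # u \<and> v \<in> Fact L \<and> u \<noteq> [] \<and> \<not> left_special L u \<and>
               (\<forall>k. 0 < k \<and> k < length u \<longrightarrow> left_special L (take k u))"
  unfolding Vset_def by blast

lemma disjoint_aux:
  assumes "v \<in> Vset L" "v' \<in> Vset L" "x \<in> Cyl L v" "x \<in> Cyl L v'" "length v \<le> length v'"
  shows "v = v'"
proof -
  obtain a u where v: "v = a # u" "u \<noteq> []" "\<not> left_special L u" using Vset_D[OF assms(1)] by blast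
  obtain a' u' where v': "v' = a' # u'" "\<forall>k. 0 < k \<and> k < length u' \<longrightarrow> left_special L (take k u')"
    using Vset_D[OF assms(2)] by blast
  have e1: "v = map x [0..<length v]" using assms(3) prefix_eq by (auto simp: Cyl_def)
  have e2: "v' = map x [0..<length v']" using assms(4) prefix_eq by (auto simp: Cyl_def)
  have tk: "v = take (length v) v'"
    using assms(5) by (subst e1, subst e2) (simp add: take_map min_def)
  then have "u = take (length u) u'" using v v' by simp
  show ?thesis
  proof (cases "length v = length v'")
    case True then show ?thesis using tk by simp
  next
    case False
    then have "length u < length u'" using assms(5) v v' by simp
    then have "left_special L (take (length u) u')" using v'(2) v(2) by simp
    then show ?thesis using \<open>u = take (length u) u'\<close> v(3) by simp
  qed
qed

lemma disjoint:
  assumes "v \<in> Vset L" "v' \<in> Vset L" "x \<in> Cyl L v" "x \<in> Cyl L v'"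
  shows "v = v'"
proof (cases "length v \<le> length v'")
  case True then show ?thesis using disjoint_aux assms by blast
next
  case False then show ?thesis using disjoint_aux[OF assms(2,1,4,3)] by simp
qed

lemma cyl_not_wsp:
  assumes "v \<in> Vset L" "x \<in> Cyl L v"
  shows "x \<notin> W_SP L"
proof
  assume "x \<in> W_SP L"
  then have sp: "shift x \<in> SP L" by (simp add: W_SP_def)
  obtain a u where v: "v = a # u" "\<not> left_special L u" using Vset_D[OF assms(1)] by blast
  have "is_prefix u (shift x)" using assms(2) v(1) unfolding Cyl_def is_prefix_def shift_def by auto
  then have "u = map (shift x) [0..<length u]" by (rule prefix_eq)
  then show False using sp v(2) unfolding SP_def by (metis (mono_tags, lifting) mem_Collect_eq)
qed

lemma SP_sub:
  assumes "is_shift L" shows "SP L \<subseteq> L"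
proof
  fix s assume "s \<in> SP L"
  then have ls: "left_special L (map s [0..<n])" for n by (simp add: SP_def)
  show "s \<in> L"
  proof (rule closed_lim)
    show "closedin cantor_top L" using assms by (simp add: is_shift_def)
    fix n
    obtain b where "b # map s [0..<n] \<in> Fact L" using ls[of n] unfolding left_special_def by blast
    then obtain y where y: "y \<in> L" "is_prefix (b # map s [0..<n]) y" using fact_prefix[OF assms] by blast
    then have "shift y \<in> L" using assms by (auto simp: is_shift_def)
    moreover have "\<forall>i<n. shift y i = s i" using y(2) unfolding is_prefix_def shift_def
      by (metis Suc_less_eq add_0 diff_zero length_Cons length_map length_upt nth_Cons_Suc nth_map_upt)
    ultimately show "\<exists>y\<in>L. \<forall>i<n. y i = s i" by blast
  qed
qed

primrec bpath :: "('a list \<Rightarrow> bool) \<Rightarrow> nat \<Rightarrow> 'a list" where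
  "bpath E 0 = []"
| "bpath E (Suc n) = bpath E n @ [SOME a. E (bpath E n @ [a])]"

lemma path_len: "p 0 = [] \<Longrightarrow> (\<And>n. p (Suc n) = p n @ [c n]) \<Longrightarrow> length (p n) = n"
  by (induction n) auto

lemma path_map:
  assumes "p 0 = []" "\<And>n. p (Suc n) = p n @ [c n]"
  shows "map (\<lambda>i. p (Suc i) ! i) [0..<n] = p n"
proof (induction n)
  case 0 then show ?case using assms by simp
next
  case (Suc n)
  have "p (Suc n) ! n = c n" using assms path_len[of p c n] by (simp add: nth_append)
  then show ?case using Suc assms(2)[of n] by simp
qed

lemma WSP_nonempty:
  fixes L :: "(nat \<Rightarrow> 'a::{linorder,finite}) set"
  assumes sh: "is_shift L" and ll: "\<forall>n. \<exists>u. left_special L u \<and> n \<le> length u"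
  shows "\<exists>t. t \<in> W_SP L"
proof -
  define E where "E u = (\<forall>n. \<exists>u'. left_special L (u @ u') \<and> n \<le> length u')" for u
  have E0: "E []" using ll by (simp add: E_def)
  have step: "E (u @ [SOME a. E (u @ [a])])" if "E u" for u
  proof -
    have "\<exists>a. \<forall>n. (\<lambda>a n. \<exists>u'. left_special L (u @ [a] @ u') \<and> n \<le> length u') a n"
    proof (rule pigeon)
      fix n
      obtain u' where u': "left_special L (u @ u')" "Suc n \<le> length u'" using \<open>E u\<close> unfolding E_def by blast
      then obtain a u'' where "u' = a # u''" by (cases u') auto
      then show "\<exists>a. \<exists>u'. left_special L (u @ [a] @ u') \<and> n \<le> length u'" using u' by auto
    next
      fix a m n assume "\<exists>u'. left_special L (u @ [a] @ u') \<and> n \<le> length u'" "m \<le> n"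
      then show "\<exists>u'. left_special L (u @ [a] @ u') \<and> m \<le> length u'" by auto
    qed
    then have "\<exists>a. E (u @ [a])" unfolding E_def by simp
    then show ?thesis by (rule someI_ex)
  qed
  define p where "p = bpath E"
  have Ep: "E (p n)" for n by (induction n) (simp_all add: p_def E0 step)
  define s where "s i = p (Suc i) ! i" for i
  have ms: "map s [0..<n] = p n" for n
    unfolding s_def by (rule path_map[where c = "\<lambda>n. SOME a. E (p n @ [a])"]) (simp_all add: p_def)
  have lsp: "left_special L (map s [0..<n])" for n
  proof -
    obtain u' where "left_special L (p n @ u')" using Ep[of n] unfolding E_def by blast
    from ls_take[OF this, of "length (p n)"] show ?thesis by (simp add: ms)
  qed
  have "\<exists>b. \<forall>n. (\<lambda>b n. b # map s [0..<n] \<in> Fact L) b n"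
  proof (rule pigeon)
    fix n show "\<exists>b. b # map s [0..<n] \<in> Fact L" using lsp[of n] unfolding left_special_def by blast
  next
    fix b m n assume "b # map s [0..<n] \<in> Fact L" "m \<le> n"
    from fact_take[OF this(1), of "Suc m"] this(2)
    show "b # map s [0..<m] \<in> Fact L" by (simp add: take_map min_def)
  qed
  then obtain b where b: "\<And>n. b # map s [0..<n] \<in> Fact L" by blast
  define t where "t i = (case i of 0 \<Rightarrow> b | Suc j \<Rightarrow> s j)" for i
  have "shift t = s" by (simp add: shift_def t_def)
  have "t \<in> L"
  proof (rule closed_lim)
    show "closedin cantor_top L" using sh by (simp add: is_shift_def)
    fix n
    obtain y where y: "y \<in> L" "is_prefix (b # map s [0..<n]) y" using fact_prefix[OF sh b] by blast
    have "\<forall>i<n. y i = t i"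
    proof (intro allI impI)
      fix i assume "i < n"
      then have "y i = (b # map s [0..<n]) ! i" using y(2) unfolding is_prefix_def by simp
      then show "y i = t i" using \<open>i < n\<close> by (cases i) (simp_all add: t_def)
    qed
    then show "\<exists>y\<in>L. \<forall>i<n. y i = t i" using y(1) by blast
  qed
  moreover have "shift t \<in> SP L" using lsp \<open>shift t = s\<close> by (simp add: SP_def)
  ultimately show ?thesis by (auto simp: W_SP_def)
qed

primrec minpre :: "(nat \<Rightarrow> 'a::linorder) set \<Rightarrow> nat \<Rightarrow> 'a list" where
  "minpre C 0 = []"
| "minpre C (Suc n) = minpre C n @ [Min {a. \<exists>y\<in>C. is_prefix (minpre C n) y \<and> y n = a}]"

lemma lex_min:
  fixes C :: "(nat \<Rightarrow> 'a::{linorder,finite}) set"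
  assumes cl: "closedin cantor_top C" and ne: "C \<noteq> {}"
  shows "\<exists>m\<in>C. \<forall>y\<in>C. lex_le m y"
proof -
  define p where "p = minpre C"
  define cand where "cand n = {a. \<exists>y\<in>C. is_prefix (p n) y \<and> y n = a}" for n
  have ps: "p (Suc n) = p n @ [Min (cand n)]" for n by (simp add: p_def cand_def)
  have p0: "p 0 = []" by (simp add: p_def)
  have lenp: "length (p n) = n" for n using path_len[of p, OF p0 ps] .
  have inv: "\<exists>y\<in>C. is_prefix (p n) y" for n
  proof (induction n)
    case 0 then show ?case using ne by (simp add: p0 is_prefix_def ex_in_conv)
  next
    case (Suc n)
    then obtain y where "y \<in> C" "is_prefix (p n) y" by blast
    then have "y n \<in> cand n" by (auto simp: cand_def)
    then have "cand n \<noteq> {}" by blast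
    then have "Min (cand n) \<in> cand n" by (simp add: Min_in)
    then obtain y' where y': "y' \<in> C" "is_prefix (p n) y'" "y' n = Min (cand n)" by (auto simp: cand_def)
    have "is_prefix (p (Suc n)) y'"
      unfolding is_prefix_def
    proof (intro allI impI)
      fix i assume "i < length (p (Suc n))"
      then have "i < Suc n" using lenp by simp
      then show "y' i = p (Suc n) ! i"
      proof (cases "i < n")
        case True then show ?thesis using y'(2) lenp unfolding is_prefix_def by (simp add: ps nth_append)
      next
        case False then have "i = n" using \<open>i < Suc n\<close> by simp
        then show ?thesis using y'(3) lenp by (simp add: ps nth_append)
      qed
    qed
    then show ?case using y'(1) by blast
  qed
  define m where "m i = p (Suc i) ! i" for i
  have mp: "map m [0..<n] = p n" for n unfolding m_def by (rule path_map[OF p0 ps])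
  have mj: "m j = Min (cand j)" for j unfolding m_def using lenp[of j] by (simp add: ps nth_append)
  have "m \<in> C"
  proof (rule closed_lim[OF cl])
    fix n
    obtain y where "y \<in> C" "is_prefix (p n) y" using inv by blast
    have pn: "p n ! i = m i" if "i < n" for i
    proof -
      have "map m [0..<n] ! i = m i" using that by simp
      then show ?thesis using mp[of n] by simp
    qed
    have "\<forall>i<n. y i = m i"
    proof (intro allI impI)
      fix i assume "i < n"
      then have "y i = p n ! i" using \<open>is_prefix (p n) y\<close> lenp[of n] unfolding is_prefix_def by simp
      then show "y i = m i" using pn \<open>i < n\<close> by simp
    qed
    then show "\<exists>y\<in>C. \<forall>i<n. y i = m i" using \<open>y \<in> C\<close> by blast
  qed
  moreover have "lex_le m y" if "y \<in> C" for y
  proof (cases "y = m")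
    case True then show ?thesis by (simp add: lex_le_def)
  next
    case False
    then have ex: "\<exists>j. y j \<noteq> m j" by auto
    define j where "j = (LEAST j. y j \<noteq> m j)"
    have yj: "y j \<noteq> m j" unfolding j_def using ex by (rule LeastI_ex)
    have lt0: "\<not> (y i \<noteq> m i)" if "i < j" for i using that unfolding j_def by (rule not_less_Least)
    have lt: "\<forall>i<j. m i = y i" using lt0 by simp
    have "is_prefix (p j) y" unfolding is_prefix_def
    proof (intro allI impI)
      fix i assume "i < length (p j)"
      then have "i < j" using lenp by simp
      have "map m [0..<j] ! i = m i" using \<open>i < j\<close> by simp
      then have "p j ! i = m i" using mp[of j] by simp
      then show "y i = p j ! i" using lt \<open>i < j\<close> by simp
    qed
    then have "y j \<in> cand j" using that by (auto simp: cand_def)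
    then have "m j \<le> y j" unfolding mj by (simp add: Min_le)
    then have "m j < y j" using yj by simp
    then show ?thesis using lt unfolding lex_le_def lex_less_def by blast
  qed
  ultimately show ?thesis by blast
qed

lemma cyl_open: "openin cantor_top (cyl n x)"
proof (rule openin_cantorI)
  fix z assume "z \<in> cyl n x"
  then have "cyl n z \<subseteq> cyl n x" by (auto simp: cyl_def)
  then show "\<exists>m. cyl m z \<subseteq> cyl n x" by blast
qed

lemma open_sub_I:
  assumes "D \<subseteq> L" "\<And>y. y \<in> D \<Longrightarrow> \<exists>n. cyl n y \<inter> L \<subseteq> D"
  shows "openin (subtopology cantor_top L) D"
proof -
  obtain N where N: "\<And>y. y \<in> D \<Longrightarrow> cyl (N y) y \<inter> L \<subseteq> D" using assms(2) by metis
  define T where "T = (\<Union>y\<in>D. cyl (N y) y)"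
  have "openin cantor_top T" unfolding T_def by (intro openin_Union) (auto intro: cyl_open)
  moreover have "D = T \<inter> L"
  proof
    show "D \<subseteq> T \<inter> L" using assms(1) by (auto simp: T_def cyl_def)
    show "T \<inter> L \<subseteq> D" using N by (auto simp: T_def)
  qed
  ultimately show ?thesis unfolding openin_subtopology by blast
qed

lemma open_sub_D:
  assumes "openin (subtopology cantor_top L) T" "x \<in> T"
  shows "\<exists>n. cyl n x \<inter> L \<subseteq> T"
proof -
  obtain T' where "openin cantor_top T'" "T = T' \<inter> L" using assms(1) unfolding openin_subtopology by blast
  moreover then obtain n where "cyl n x \<subseteq> T'" using assms(2) openin_cantor_D by blast
  ultimately show ?thesis by blast
qed

lemma Cyl_map: "Cyl L (map y [0..<n]) = cyl n y \<inter> L"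
  unfolding Cyl_def cyl_def is_prefix_def by auto

lemma Cyl_open: "openin (subtopology cantor_top L) (Cyl L v)"
proof (rule open_sub_I)
  show "Cyl L v \<subseteq> L" by (auto simp: Cyl_def)
  fix y assume "y \<in> Cyl L v"
  then have "cyl (length v) y \<inter> L \<subseteq> Cyl L v" by (auto simp: Cyl_def cyl_def is_prefix_def)
  then show "\<exists>n. cyl n y \<inter> L \<subseteq> Cyl L v" by blast
qed

lemma Cyl_closed: assumes "closedin cantor_top L" shows "closedin cantor_top (Cyl L v)"
proof -
  have "openin cantor_top (UNIV - {y. is_prefix v y})"
  proof (rule openin_cantorI)
    fix x assume "x \<in> UNIV - {y. is_prefix v y}"
    then have "cyl (length v) x \<subseteq> UNIV - {y. is_prefix v y}" by (auto simp: cyl_def is_prefix_def)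
    then show "\<exists>n. cyl n x \<subseteq> UNIV - {y. is_prefix v y}" by blast
  qed
  then have "closedin cantor_top {y. is_prefix v y}" by (rule closedin_cantorI)
  moreover have "Cyl L v = L \<inter> {y. is_prefix v y}" by (auto simp: Cyl_def)
  ultimately show ?thesis using assms by auto
qed

locale shsetup =
  fixes L :: "(nat \<Rightarrow> 'a::{linorder,finite}) set"
    and M :: "(nat \<Rightarrow> 'a) measure"
  assumes shiftL: "is_shift L"
    and ls_long: "\<forall>n. \<exists>u. left_special L u \<and> n \<le> length u"
    and space_M: "space M = L"
    and borel_M: "sets M = borel_sets_of (subtopology cantor_top L)"
    and inv: "\<forall>S\<in>sets M. emeasure M (shift -` S \<inter> space M) = emeasure M S"
    and pos: "\<forall>v. Cyl L v \<noteq> {} \<longrightarrow> emeasure M (Cyl L v) > 0"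
begin

lemma clL: "closedin cantor_top L" using shiftL by (simp add: is_shift_def)

lemma topL: "topspace (subtopology cantor_top L) = L" by simp

lemma open_sets: assumes "openin (subtopology cantor_top L) U" shows "U \<in> sets M"
  unfolding borel_M borel_sets_of_def using assms by (auto intro: sigma_sets.Basic)

lemma compl_sets: "openin (subtopology cantor_top L) U \<Longrightarrow> L - U \<in> sets M"
proof -
  assume "openin (subtopology cantor_top L) U"
  then have "U \<in> sigma_sets (topspace (subtopology cantor_top L)) {U. openin (subtopology cantor_top L) U}"
    by (auto intro: sigma_sets.Basic)
  then have "topspace (subtopology cantor_top L) - U \<in> sigma_sets (topspace (subtopology cantor_top L)) {U. openin (subtopology cantor_top L) U}"
    by (rule sigma_sets.Compl)
  then show ?thesis unfolding borel_M borel_sets_of_def by simp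
qed

lemma null_cyl: assumes "S \<in> sets M" "emeasure M S = 0" "Cyl L p \<subseteq> S" shows "Cyl L p = {}"
proof (rule ccontr)
  assume "Cyl L p \<noteq> {}"
  then have "emeasure M (Cyl L p) > 0" using pos by blast
  moreover have "emeasure M (Cyl L p) \<le> emeasure M S" using emeasure_mono[OF assms(3,1)] .
  ultimately show False using assms(2) by simp
qed

lemma surj_shift: "shift ` L = L"
proof -
  define D where "D = L - shift ` L"
  have "shift ` L \<subseteq> L" using shiftL by (simp add: is_shift_def)
  have Dopen: "openin (subtopology cantor_top L) D"
  proof (rule open_sub_I)
    show "D \<subseteq> L" by (auto simp: D_def)
    fix y assume yD: "y \<in> D"
    show "\<exists>n. cyl n y \<inter> L \<subseteq> D"
    proof (rule ccontr)
      assume nn: "\<nexists>n. cyl n y \<inter> L \<subseteq> D"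
      have "\<exists>a. \<forall>n. (\<lambda>a n. \<exists>z\<in>L. z 0 = a \<and> (\<forall>i<n. shift z i = y i)) a n"
      proof (rule pigeon)
        fix n
        obtain z' where "z' \<in> cyl n y" "z' \<in> L" "z' \<notin> D" using nn by blast
        then obtain z where "z \<in> L" "z' = shift z" by (auto simp: D_def)
        then show "\<exists>a. \<exists>z\<in>L. z 0 = a \<and> (\<forall>i<n. shift z i = y i)"
          using \<open>z' \<in> cyl n y\<close> by (auto simp: cyl_def)
      next
        fix a m n assume "\<exists>z\<in>L. z 0 = a \<and> (\<forall>i<n. shift z i = y i)" "m \<le> n"
        then show "\<exists>z\<in>L. z 0 = a \<and> (\<forall>i<m. shift z i = y i)" by auto
      qed
      then obtain a where a: "\<And>n. \<exists>z\<in>L. z 0 = a \<and> (\<forall>i<n. shift z i = y i)" by blast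
      define t where "t i = (case i of 0 \<Rightarrow> a | Suc j \<Rightarrow> y j)" for i
      have "t \<in> L"
      proof (rule closed_lim[OF clL])
        fix n
        obtain z where z: "z \<in> L" "z 0 = a" "\<forall>i<n. shift z i = y i" using a by blast
        have "\<forall>i<n. z i = t i"
        proof (intro allI impI)
          fix i assume "i < n"
          show "z i = t i"
          proof (cases i)
            case 0 then show ?thesis using z by (simp add: t_def)
          next
            case (Suc j)
            then have "j < n" using \<open>i < n\<close> by simp
            then show ?thesis using z(3) Suc by (simp add: t_def shift_def)
          qed
        qed
        then show "\<exists>z\<in>L. \<forall>i<n. z i = t i" using z(1) by blast
      qed
      moreover have "shift t = y" by (simp add: shift_def t_def)
      ultimately show False using yD by (auto simp: D_def)
    qed
  qed
  have "D \<in> sets M" using Dopen by (rule open_sets)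
  moreover have "shift -` D \<inter> space M = {}" using space_M by (auto simp: D_def)
  ultimately have D0: "emeasure M D = 0"
  proof -
    assume a: "D \<in> sets M" "shift -` D \<inter> space M = {}"
    have "emeasure M (shift -` D \<inter> space M) = emeasure M D" using inv a(1) by blast
    then show ?thesis using a(2) by simp
  qed
  have "D = {}"
  proof (rule ccontr)
    assume "D \<noteq> {}"
    then obtain y where "y \<in> D" by blast
    then obtain n where "cyl n y \<inter> L \<subseteq> D" using open_sub_D[OF Dopen \<open>y \<in> D\<close>] by blast
    then have "Cyl L (map y [0..<n]) \<subseteq> D" by (simp add: Cyl_map)
    then have "Cyl L (map y [0..<n]) = {}" using null_cyl[OF \<open>D \<in> sets M\<close> D0] by blast
    moreover have "y \<in> Cyl L (map y [0..<n])" using \<open>y \<in> D\<close> by (auto simp: D_def Cyl_def)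
    ultimately show False by blast
  qed
  then show ?thesis using \<open>shift ` L \<subseteq> L\<close> by (auto simp: D_def)
qed

end

lemma map_eq_prefix: "(\<forall>i<n. z i = y i) \<Longrightarrow> map z [0..<n] = map y [0..<n]"
  by (rule map_cong) auto

lemma subsingleton_finite: "(\<And>a b. a \<in> A \<Longrightarrow> b \<in> A \<Longrightarrow> a = b) \<Longrightarrow> finite A"
proof (cases "A = {}")
  case False
  assume h: "\<And>a b. a \<in> A \<Longrightarrow> b \<in> A \<Longrightarrow> a = b"
  obtain a where "a \<in> A" using False by blast
  then have "A \<subseteq> {a}" using h by blast
  then show ?thesis using finite_subset by blast
qed simp

lemma Vset_nonempty:
  assumes "is_shift L" "v \<in> Vset L" shows "Cyl L v \<noteq> {}"
proof -
  have "v \<in> Fact L" using Vset_D[OF assms(2)] by blast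
  then obtain y where "y \<in> L" "is_prefix v y" using fact_prefix[OF assms(1)] by blast
  then show ?thesis by (auto simp: Cyl_def)
qed

context shsetup
begin

lemma SP_sets: "SP L \<in> sets M"
proof -
  have "openin (subtopology cantor_top L) (L - SP L)"
  proof (rule open_sub_I)
    fix y assume "y \<in> L - SP L"
    then obtain n where n: "\<not> left_special L (map y [0..<n])" by (auto simp: SP_def)
    have "cyl n y \<inter> L \<subseteq> L - SP L"
    proof
      fix z assume "z \<in> cyl n y \<inter> L"
      then have eq: "map z [0..<n] = map y [0..<n]" by (intro map_eq_prefix) (simp add: cyl_def)
      have "\<not> left_special L (map z [0..<n])" using n by (subst eq)
      then have "z \<notin> SP L" unfolding SP_def by blast
      then show "z \<in> L - SP L" using \<open>z \<in> cyl n y \<inter> L\<close> by blast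
    qed
    then show "\<exists>n. cyl n y \<inter> L \<subseteq> L - SP L" by blast
  qed simp
  then have "L - (L - SP L) \<in> sets M" by (rule compl_sets)
  moreover have "L - (L - SP L) = SP L" using SP_sub[OF shiftL] by blast
  ultimately show ?thesis by simp
qed

lemma WSP_sets: "W_SP L \<in> sets M"
proof -
  have "openin (subtopology cantor_top L) (L - W_SP L)"
  proof (rule open_sub_I)
    fix y assume "y \<in> L - W_SP L"
    then obtain n where n: "\<not> left_special L (map (shift y) [0..<n])" by (auto simp: SP_def W_SP_def)
    have "cyl (Suc n) y \<inter> L \<subseteq> L - W_SP L"
    proof
      fix z assume "z \<in> cyl (Suc n) y \<inter> L"
      then have eq: "map (shift z) [0..<n] = map (shift y) [0..<n]" by (intro map_eq_prefix) (simp add: cyl_def shift_def)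
      have "\<not> left_special L (map (shift z) [0..<n])" using n by (subst eq)
      then have "shift z \<notin> SP L" unfolding SP_def by blast
      then show "z \<in> L - W_SP L" using \<open>z \<in> cyl (Suc n) y \<inter> L\<close> by (auto simp: W_SP_def)
    qed
    then show "\<exists>n. cyl n y \<inter> L \<subseteq> L - W_SP L" by blast
  qed simp
  then have "L - (L - W_SP L) \<in> sets M" by (rule compl_sets)
  moreover have "L - (L - W_SP L) = W_SP L" by (auto simp: W_SP_def)
  ultimately show ?thesis by simp
qed

lemma WSP_null: assumes "emeasure M (SP L) = 0" shows "emeasure M (W_SP L) = 0"
proof -
  have "shift -` SP L \<inter> space M = W_SP L" using space_M by (auto simp: W_SP_def)
  then show ?thesis using inv SP_sets assms by metis
qed

lemma core:
  assumes SPn: "emeasure M (SP L) = 0" and w: "w \<in> W_SP L"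
  shows "\<exists>v\<in>Vset L. n < length v \<and> (\<forall>x\<in>Cyl L v. \<forall>i<n. x i = w i)"
proof -
  have wL: "w \<in> L" using w by (simp add: W_SP_def)
  have "w \<in> Cyl L (map w [0..<n])" using wL by (simp add: Cyl_def)
  then have "\<not> Cyl L (map w [0..<n]) \<subseteq> W_SP L" using null_cyl[OF WSP_sets WSP_null[OF SPn]] by blast
  then obtain x where x: "x \<in> Cyl L (map w [0..<n])" "x \<notin> W_SP L" by blast
  then have xL: "x \<in> L" and xw: "\<forall>i<n. x i = w i" by (auto simp: Cyl_def is_prefix_def)
  obtain v where v: "v \<in> Vset L" "x \<in> Cyl L v" using covering[OF xL x(2) ls_nil[OF ls_long]] by blast
  have vx: "v = map x [0..<length v]" using v(2) prefix_eq by (auto simp: Cyl_def)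
  show ?thesis
  proof (cases "length v \<le> n")
    case True
    then have "map x [0..<length v] = map w [0..<length v]" using xw by (intro map_eq_prefix) simp
    then have "w \<in> Cyl L v" using vx wL by (simp add: Cyl_def) (metis is_prefix_map)
    then show ?thesis using cyl_not_wsp[OF v(1)] w by blast
  next
    case False
    have "\<forall>y\<in>Cyl L v. \<forall>i<n. y i = w i"
    proof (intro ballI allI impI)
      fix y i assume "y \<in> Cyl L v" "i < n"
      then have "y i = v ! i" using False by (simp add: Cyl_def is_prefix_def)
      also have "v ! i = x i" using v(2) False \<open>i < n\<close> by (simp add: Cyl_def is_prefix_def)
      finally show "y i = w i" using xw \<open>i < n\<close> by simp
    qed
    moreover have "n < length v" using False by simp
    ultimately show ?thesis using v(1) by blast
  qed
qed

lemma interval_shift: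
  assumes v: "v \<in> Vset L" and w: "w \<in> Cyl L v" and w': "w' \<in> Cyl L v"
  shows "shift ` interval L w w' = interval L (shift w) (shift w')"
proof -
  obtain a u where au: "v = a # u" "v \<in> Fact L" "\<not> left_special L u" using Vset_D[OF v] by blast
  have pw: "\<forall>i<length v. w i = v ! i" using w by (simp add: Cyl_def is_prefix_def)
  have pw': "\<forall>i<length v. w' i = v ! i" using w' by (simp add: Cyl_def is_prefix_def)
  have ww: "\<forall>i<length v. w i = w' i" using pw pw' by simp
  have w0: "w 0 = a" "w' 0 = a" using pw pw' au(1) by auto
  have sww: "\<forall>i<length u. shift w i = shift w' i" using ww au(1) by (simp add: shift_def)
  show ?thesis
  proof
    show "shift ` interval L w w' \<subseteq> interval L (shift w) (shift w')"
    proof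
      fix y assume "y \<in> shift ` interval L w w'"
      then obtain x where x: "x \<in> L" "lex_le w x" "lex_le x w'" "y = shift x" by (auto simp: interval_def)
      have "\<forall>i<length v. x i = w i" using lex_between[OF x(2,3) ww] .
      then have x0: "x 0 = a" using w0 au(1) by auto
      have "shift x \<in> L" using x(1) shiftL by (auto simp: is_shift_def)
      moreover have "lex_le (shift w) (shift x)" using x(2) lex_le_shift[of w x] x0 w0 by simp
      moreover have "lex_le (shift x) (shift w')" using x(3) lex_le_shift[of x w'] x0 w0 by simp
      ultimately show "y \<in> interval L (shift w) (shift w')" using x(4) by (simp add: interval_def)
    qed
  next
    show "interval L (shift w) (shift w') \<subseteq> shift ` interval L w w'"
    proof
      fix y assume "y \<in> interval L (shift w) (shift w')"
      then have y: "y \<in> L" "lex_le (shift w) y" "lex_le y (shift w')" by (auto simp: interval_def)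
      have yw: "\<forall>i<length u. y i = shift w i" using lex_between[OF y(2,3) sww] .
      obtain z where z: "z \<in> L" "y = shift z" using y(1) surj_shift by (metis imageE)
      have "is_prefix (z 0 # u) z"
        unfolding is_prefix_def
      proof (intro allI impI)
        fix i assume "i < length (z 0 # u)"
        show "z i = (z 0 # u) ! i"
        proof (cases i)
          case 0 then show ?thesis by simp
        next
          case (Suc j)
          then have "j < length u" using \<open>i < length (z 0 # u)\<close> by simp
          then have "z (Suc j) = w (Suc j)" using yw z(2) by (simp add: shift_def)
          also have "w (Suc j) = v ! Suc j" using pw \<open>j < length u\<close> au(1) by simp
          finally show ?thesis using Suc au(1) by simp
        qed
      qed
      then have "z 0 # u \<in> Fact L" using prefix_fact[OF z(1)] by blast
      then have z0: "z 0 = a" using au unfolding left_special_def by blast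
      have "lex_le w z" using y(2) z(2) lex_le_shift[of w z] z0 w0 by simp
      moreover have "lex_le z w'" using y(3) z(2) lex_le_shift[of z w'] z0 w0 by simp
      ultimately have "z \<in> interval L w w'" using z(1) by (simp add: interval_def)
      then show "y \<in> shift ` interval L w w'" using z(2) by blast
    qed
  qed
qed

end

context shsetup
begin

lemma derived_sub:
  assumes SPn: "emeasure M (SP L) = 0"
  shows "W_SP L \<subseteq> L \<inter> ((subtopology cantor_top L) derived_set_of (endpoints L))"
proof
  fix w assume w: "w \<in> W_SP L"
  then have wL: "w \<in> L" by (simp add: W_SP_def)
  have "w \<in> (subtopology cantor_top L) derived_set_of (endpoints L)"
    unfolding derived_set_of_def
  proof (intro CollectI conjI allI impI)
    show "w \<in> topspace (subtopology cantor_top L)" using wL by simp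
    fix T assume T: "w \<in> T \<and> openin (subtopology cantor_top L) T"
    then obtain n where n: "cyl n w \<inter> L \<subseteq> T" using open_sub_D by blast
    obtain v where v: "v \<in> Vset L" "\<forall>x\<in>Cyl L v. \<forall>i<n. x i = w i" using core[OF SPn w] by blast
    have "Cyl L v \<noteq> {}" using Vset_nonempty[OF shiftL v(1)] .
    then obtain m where m: "m \<in> Cyl L v" "\<forall>y\<in>Cyl L v. lex_le m y" using lex_min[OF Cyl_closed[OF clL]] by blast
    have "m \<in> endpoints L" unfolding endpoints_def using v(1) m by blast
    moreover have "m \<noteq> w" using cyl_not_wsp[OF v(1) m(1)] w by blast
    moreover have "m \<in> T"
    proof -
      have "m \<in> cyl n w" using v(2) m(1) by (simp add: cyl_def)
      moreover have "m \<in> L" using m(1) by (simp add: Cyl_def)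
      ultimately show ?thesis using n by blast
    qed
    ultimately show "\<exists>y. y \<noteq> w \<and> y \<in> endpoints L \<and> y \<in> T" by blast
  qed
  then show "w \<in> L \<inter> ((subtopology cantor_top L) derived_set_of (endpoints L))" using wL by blast
qed

lemma derived_sup:
  shows "L \<inter> ((subtopology cantor_top L) derived_set_of (endpoints L)) \<subseteq> W_SP L"
proof
  fix x assume x: "x \<in> L \<inter> ((subtopology cantor_top L) derived_set_of (endpoints L))"
  show "x \<in> W_SP L"
  proof (rule ccontr)
    assume nw: "x \<notin> W_SP L"
    obtain v where v: "v \<in> Vset L" "x \<in> Cyl L v" using covering[OF _ nw ls_nil[OF ls_long]] x by blast
    define E where "E = endpoints L \<inter> Cyl L v"
    define A where "A = {e\<in>Cyl L v. \<forall>y\<in>Cyl L v. lex_le e y}"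
    define B where "B = {e\<in>Cyl L v. \<forall>y\<in>Cyl L v. lex_le y e}"
    have "E \<subseteq> A \<union> B"
    proof
      fix e assume "e \<in> E"
      then obtain v' where v': "v' \<in> Vset L" "e \<in> Cyl L v'"
          "(\<forall>y\<in>Cyl L v'. lex_le e y) \<or> (\<forall>y\<in>Cyl L v'. lex_le y e)" and ev: "e \<in> Cyl L v"
        unfolding E_def endpoints_def by blast
      have "v' = v" using disjoint[OF v'(1) v(1) v'(2) ev] .
      then show "e \<in> A \<union> B" using v'(3) ev by (auto simp: A_def B_def)
    qed
    moreover have "finite A" by (rule subsingleton_finite) (auto simp: A_def intro: lex_le_antisym)
    moreover have "finite B" by (rule subsingleton_finite) (auto simp: B_def intro: lex_le_antisym)
    ultimately have fE: "finite E" by (meson finite_UnI finite_subset)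
    define F where "F = E - {x}"
    have "finite F" using fE by (simp add: F_def)
    moreover have "F \<subseteq> topspace (subtopology cantor_top L)" by (auto simp: F_def E_def Cyl_def)
    ultimately have "closedin (subtopology cantor_top L) F"
      using t1_space_subtopology[OF t1_cantor] t1_space_closedin_finite by blast
    then have Topen: "openin (subtopology cantor_top L) (Cyl L v - F)" using Cyl_open by blast
    have "x \<in> Cyl L v - F" using v(2) by (simp add: F_def)
    then obtain y where y: "y \<noteq> x" "y \<in> endpoints L" "y \<in> Cyl L v - F"
      using x Topen unfolding derived_set_of_def by blast
    then show False by (auto simp: F_def E_def)
  qed
qed

end

theorem mainTheorem11:
  fixes L :: "(nat \<Rightarrow> 'a::{linorder,finite}) set"
    and M :: "(nat \<Rightarrow> 'a) measure"
  assumes shiftL: "is_shift L"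
    and ls_long: "\<forall>n. \<exists>u. left_special L u \<and> n \<le> length u"
    and prob: "prob_space M"
    and space_M: "space M = L"
    and borel_M: "sets M = borel_sets_of (subtopology cantor_top L)"
    and inv: "\<forall>S\<in>sets M. emeasure M (shift -` S \<inter> space M) = emeasure M S"
    and nonatomic: "\<forall>w\<in>L. emeasure M {w} = 0"
    and regular: "regular_measure (subtopology cantor_top L) M"
    and pos: "\<forall>v. Cyl L v \<noteq> {} \<longrightarrow> emeasure M (Cyl L v) > 0"
    and SP_null: "emeasure M (SP L) = 0"
  shows "infinite (Vset L)
    \<and> L = (\<Union>v\<in>Vset L. Cyl L v) \<union> W_SP L
    \<and> (\<forall>v\<in>Vset L. \<forall>v'\<in>Vset L. v \<noteq> v' \<longrightarrow> Cyl L v \<inter> Cyl L v' = {})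
    \<and> (\<forall>v\<in>Vset L. Cyl L v \<inter> W_SP L = {})
    \<and> (\<forall>v\<in>Vset L. \<forall>w\<in>Cyl L v. \<forall>w'\<in>Cyl L v. lex_less w w' \<longrightarrow>
          shift ` interval L w w' = interval L (shift w) (shift w'))
    \<and> W_SP L \<noteq> {}
    \<and> W_SP L \<in> sets M \<and> emeasure M (W_SP L) = 0
    \<and> W_SP L = L \<inter> ((subtopology cantor_top L) derived_set_of (endpoints L))"
proof -
  interpret S: shsetup L M
    using shiftL ls_long space_M borel_M inv pos by (unfold_locales) auto
  obtain w0 where w0: "w0 \<in> W_SP L" using WSP_nonempty[OF shiftL ls_long] by blast
  have inf: "infinite (Vset L)"
  proof
    assume fin: "finite (Vset L)"
    obtain v where v: "v \<in> Vset L" "Max (length ` Vset L) < length v"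
      using S.core[OF SP_null w0, of "Max (length ` Vset L)"] by blast
    have "length v \<le> Max (length ` Vset L)" using fin v(1) by simp
    then show False using v(2) by simp
  qed
  have cover: "L = (\<Union>v\<in>Vset L. Cyl L v) \<union> W_SP L"
  proof
    show "L \<subseteq> (\<Union>v\<in>Vset L. Cyl L v) \<union> W_SP L"
    proof
      fix x assume "x \<in> L"
      then show "x \<in> (\<Union>v\<in>Vset L. Cyl L v) \<union> W_SP L"
        using covering[OF \<open>x \<in> L\<close> _ ls_nil[OF ls_long]] by blast
    qed
    show "(\<Union>v\<in>Vset L. Cyl L v) \<union> W_SP L \<subseteq> L" by (auto simp: Cyl_def W_SP_def)
  qed
  have disj: "\<forall>v\<in>Vset L. \<forall>v'\<in>Vset L. v \<noteq> v' \<longrightarrow> Cyl L v \<inter> Cyl L v' = {}"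
    using disjoint by blast
  have disjW: "\<forall>v\<in>Vset L. Cyl L v \<inter> W_SP L = {}"
    using cyl_not_wsp by blast
  have intv: "\<forall>v\<in>Vset L. \<forall>w\<in>Cyl L v. \<forall>w'\<in>Cyl L v. lex_less w w' \<longrightarrow>
          shift ` interval L w w' = interval L (shift w) (shift w')"
    using S.interval_shift by blast
  have ne: "W_SP L \<noteq> {}" using w0 by blast
  have der: "W_SP L = L \<inter> ((subtopology cantor_top L) derived_set_of (endpoints L))"
    using S.derived_sub[OF SP_null] S.derived_sup by blast
  show ?thesis
    using inf cover disj disjW intv ne S.WSP_sets S.WSP_null[OF SP_null] der by blast
qed

end
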